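(* For $m,n,s\in\mathbb{N}$, $${}_{s+1}F_s\left(\{\tfrac12\}^{s},1-n;\{\tfrac32\}^{s};1\right)=\sum_{k=1}^n(-1)^{k-1}\binom{n}{k}\overline{H}_k(s),$$ $${}_{s+1}F_s\left(\{\tfrac12\}^{s},1-n;\{\tfrac32\}^{s};-1\right)=\sum_{k=1}^n(-1)^{k-1}\binom{n}{k}\overline{H}_k(\overline{s}),$$ and $${}_2F_1(1,1-n;m+n;-1)=(m-1)!\,(m+n-1)\sum_{k=1}^n(-1)^{k-1}\binom{n}{k}G_{m,k}.$$
   Context: $\mathbb{N}$ is the set of positive integers; $\{a\}^s$ denotes $a$ repeated $s$ times. $\overline{H}_k(s)=\sum_{j=0}^{k-1}\frac{1}{(2j+1)^s}$, $\overline{H}_k(\overline{s})=\sum_{j=0}^{k-1}\frac{(-1)^j}{(2j+1)^s}$, and $G_{m,k}=\sum_{j=0}^{k-1}\frac{1}{(2j+1)(2j+2)\cdots(2j+m)}$. ${}_{s+1}F_s(a_1,\ldots,a_{s+1};b_1,\ldots,b_s;x)=\sum_{i\geq 0}\frac{(a_1)_i\cdots(a_{s+1})_i}{(b_1)_i\cdots(b_s)_i}\frac{x^i}{i!}$, with $(a)_0=1$, $(a)_i=a(a+1)\cdots(a+i-1)$ for $i>0$ (a finite sum here since $1-n\leq 0$ is an integer). *)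

theory Defs
  imports "HOL-Analysis.Analysis"
begin

text \<open>Defined as an infinite series (suminf); in all uses here it terminates since an upper
  parameter is a nonpositive integer.\<close>
definition hypergeom :: "real list \<Rightarrow> real list \<Rightarrow> real \<Rightarrow> real" where
  "hypergeom as bs x =
     (\<Sum>i. (\<Prod>a\<leftarrow>as. pochhammer a i) / (\<Prod>b\<leftarrow>bs. pochhammer b i) * x ^ i / fact i)"

definition Hbar :: "nat \<Rightarrow> nat \<Rightarrow> real" where
  "Hbar k s = (\<Sum>j<k. 1 / (2 * real j + 1) ^ s)"

definition Hbar_alt :: "nat \<Rightarrow> nat \<Rightarrow> real" where
  "Hbar_alt k s = (\<Sum>j<k. (-1) ^ j / (2 * real j + 1) ^ s)"

definition G :: "nat \<Rightarrow> nat \<Rightarrow> real" where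
  "G m k = (\<Sum>j<k. 1 / (\<Prod>i=1..m. 2 * real j + real i))"

end

theory Submission
  imports Defs
begin

lemma beta_arith:
  fixes x y A B F :: real
  assumes "F > 0" "x \<ge> 0" "y \<ge> 0"
  shows "A * B / F - ((x + 1) * A) * B / ((x + y + 2) * F) = A * ((y + 1) * B) / ((x + y + 2) * F)"
proof -
  have "x + y + 2 > 0" using assms by simp
  then have nz: "(x + y + 2) * F \<noteq> 0" "F \<noteq> 0" "x + y + 2 \<noteq> 0" using assms by auto
  have "A * B / F = A * B * (x + y + 2) / ((x + y + 2) * F)" using nz by simp
  then have "A * B / F - ((x + 1) * A) * B / ((x + y + 2) * F) = (A * B * (x + y + 2) - ((x + 1) * A) * B) / ((x + y + 2) * F)"
    by (simp add: diff_divide_distrib)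
  also have "A * B * (x + y + 2) - ((x + 1) * A) * B = A * ((y + 1) * B)" by (simp add: algebra_simps)
  finally show ?thesis .
qed

lemma beta_int:
  "((\<lambda>t::real. t ^ a * (1 - t) ^ b) has_integral (fact a * fact b / fact (a + b + 1))) {0..1}"
proof (induction b arbitrary: a)
  case 0
  have "((\<lambda>t::real. t ^ a) has_integral ((1::real) ^ Suc a / real (Suc a) - 0 ^ Suc a / real (Suc a))) {0..1}"
  proof (rule fundamental_theorem_of_calculus)
    fix x :: real
    have "((\<lambda>t::real. t ^ Suc a / real (Suc a)) has_real_derivative x ^ a) (at x)"
      using DERIV_cdivide[OF DERIV_pow[of "Suc a" x], of "real (Suc a)"] by simp
    then show "((\<lambda>t::real. t ^ Suc a / real (Suc a)) has_vector_derivative x ^ a) (at x within {0..1})"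
      by (simp add: has_real_derivative_iff_has_vector_derivative[symmetric] has_field_derivative_at_within)
  qed simp
  moreover have "(fact a * fact 0 / fact (a + 0 + 1) :: real) = 1 ^ Suc a / real (Suc a) - 0 ^ Suc a / real (Suc a)"
  proof -
    have "(fact a::real) > 0" by simp
    then have "fact a + fact a * real a \<noteq> 0"
      by (metis add_pos_nonneg less_irrefl mult_nonneg_nonneg of_nat_0_le_iff order_less_le)
    then show ?thesis by (simp add: fact_Suc divide_simps algebra_simps)
  qed
  ultimately show ?case by simp
next
  case (Suc b)
  have eq: "(\<lambda>t::real. t ^ a * (1 - t) ^ Suc b) = (\<lambda>t. t ^ a * (1 - t) ^ b - t ^ Suc a * (1 - t) ^ b)"
    by (auto simp: algebra_simps)
  have "((\<lambda>t::real. t ^ a * (1 - t) ^ b - t ^ Suc a * (1 - t) ^ b) has_integral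
     (fact a * fact b / fact (a + b + 1) - fact (Suc a) * fact b / fact (Suc a + b + 1))) {0..1}"
    by (intro has_integral_diff Suc.IH)
  moreover have "fact a * fact b / fact (a + b + 1) - fact (Suc a) * fact b / fact (Suc a + b + 1)
      = (fact a * fact (Suc b) / fact (a + Suc b + 1) :: real)"
  proof -
    have f1: "fact (Suc a + b + 1) = (real a + b + 2) * (fact (a + b + 1) :: real)"
      by (simp add: fact_Suc algebra_simps)
    have f2: "fact (a + Suc b + 1) = (real a + b + 2) * (fact (a + b + 1) :: real)"
      by (simp add: fact_Suc algebra_simps)
    have f3: "fact (Suc a) = (real a + 1) * (fact a :: real)" "fact (Suc b) = (real b + 1) * (fact b :: real)"
      by (simp_all add: fact_Suc algebra_simps)
    have F: "(fact (a + b + 1) :: real) > 0" by simp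
    have P: "real a + real b + 2 > 0" by simp
    show ?thesis unfolding f1 f2 f3
      using beta_arith[OF F, of "real a" "real b" "fact a" "fact b"] by simp
  qed
  ultimately show ?case unfolding eq by metis
qed

definition Bf :: "nat \<Rightarrow> nat \<Rightarrow> real" where
  "Bf a b = fact a * fact b / fact (a + b + 1)"

lemma beta_sum:
  "(\<Sum>j\<le>N. ((-1) ^ j * real (N choose j)) * Bf (2 * j) k) = (\<Sum>j\<le>N. real (N choose j) * Bf j (N + k))"
proof -
  have e1: "(1 - t ^ 2) ^ N * (1 - t) ^ k = (\<Sum>j\<le>N. ((-1) ^ j * real (N choose j)) * (t ^ (2 * j) * (1 - t) ^ k))" for t :: real
  proof -
    have "(1 - t ^ 2) ^ N = (- (t ^ 2) + 1) ^ N" by simp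
    also have "\<dots> = (\<Sum>j\<le>N. real (N choose j) * (- (t ^ 2)) ^ j * 1 ^ (N - j))"
      by (rule binomial_ring)
    also have "\<dots> = (\<Sum>j\<le>N. ((-1) ^ j * real (N choose j)) * t ^ (2 * j))"
    proof (intro sum.cong refl)
      fix j
      have "(- (t ^ 2)) ^ j = (-1) ^ j * t ^ (2 * j)"
        by (subst power_mult) (rule power_minus)
      then show "real (N choose j) * (- (t ^ 2)) ^ j * 1 ^ (N - j) = ((-1) ^ j * real (N choose j)) * t ^ (2 * j)"
        by simp
    qed
    finally show ?thesis by (simp add: sum_distrib_right mult.assoc)
  qed
  have e2: "(1 - t ^ 2) ^ N * (1 - t) ^ k = (\<Sum>j\<le>N. real (N choose j) * (t ^ j * (1 - t) ^ (N + k)))" for t :: real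
  proof -
    have sq: "1 - t ^ 2 = (t + 1) * (1 - t)" by (simp add: power2_eq_square algebra_simps)
    have "(1 - t ^ 2) ^ N * (1 - t) ^ k = (t + 1) ^ N * ((1 - t) ^ N * (1 - t) ^ k)"
      unfolding sq power_mult_distrib by (simp only: mult.assoc)
    also have "\<dots> = (t + 1) ^ N * (1 - t) ^ (N + k)" by (simp only: power_add)
    finally have "(1 - t ^ 2) ^ N * (1 - t) ^ k = (t + 1) ^ N * (1 - t) ^ (N + k)" .
    also have "(t + 1) ^ N = (\<Sum>j\<le>N. real (N choose j) * t ^ j * 1 ^ (N - j))"
      by (rule binomial_ring)
    finally show ?thesis by (simp add: sum_distrib_right mult.assoc)
  qed
  have i1: "((\<lambda>t::real. (1 - t ^ 2) ^ N * (1 - t) ^ k) has_integral (\<Sum>j\<le>N. ((-1) ^ j * real (N choose j)) * Bf (2 * j) k)) {0..1}"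
    unfolding e1 Bf_def
    by (intro has_integral_sum finite_atMost ballI has_integral_mult_right beta_int)
  have i2: "((\<lambda>t::real. (1 - t ^ 2) ^ N * (1 - t) ^ k) has_integral (\<Sum>j\<le>N. real (N choose j) * Bf j (N + k))) {0..1}"
    unfolding e2 Bf_def
    by (intro has_integral_sum finite_atMost ballI has_integral_mult_right beta_int)
  show ?thesis using has_integral_unique[OF i1 i2] .
qed


lemma alt_partial:
  assumes "j < n"
  shows "(\<Sum>k=Suc j..n. (-1) ^ (k - 1) * real (n choose k)) = (-1) ^ j * real (n - 1 choose j)"
proof -
  have tot: "(\<Sum>k\<le>n. (-1) ^ k * real (n choose k)) = 0"
    using assms by (intro choose_alternating_sum) simp
  have part: "(\<Sum>k\<le>j. (-1) ^ k * real (n choose k)) = (-1) ^ j * real (n - 1 choose j)"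
  proof -
    have "(\<Sum>k\<le>j. (real n gchoose k) * (-1) ^ k) = (-1) ^ j * (real n - 1 gchoose j)"
      by (rule gbinomial_sum_lower_neg)
    moreover have "real n - 1 = real (n - 1)" using assms by simp
    then have "(real n - 1 gchoose j) = real (n - 1 choose j)" by (simp only: binomial_gbinomial)
    moreover have "(\<Sum>k\<le>j. (-1) ^ k * real (n choose k)) = (\<Sum>k\<le>j. (real n gchoose k) * (-1) ^ k)"
      by (intro sum.cong refl) (simp only: binomial_gbinomial mult.commute)
    ultimately show ?thesis by simp
  qed
  have split: "{..n} = {..j} \<union> {Suc j..n}" using assms by auto
  have "(\<Sum>k\<le>n. (-1) ^ k * real (n choose k)) =
        (\<Sum>k\<le>j. (-1) ^ k * real (n choose k)) + (\<Sum>k=Suc j..n. (-1) ^ k * real (n choose k))"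
    unfolding split by (rule sum.union_disjoint) auto
  moreover have "(\<Sum>k=Suc j..n. (-1) ^ (k - 1) * real (n choose k)) = - (\<Sum>k=Suc j..n. (-1) ^ k * real (n choose k))"
    unfolding sum_negf[symmetric]
  proof (intro sum.cong refl)
    fix k assume "k \<in> {Suc j..n}"
    then obtain l where "k = Suc l" by (cases k) auto
    then show "(-1) ^ (k - 1) * real (n choose k) = - ((-1) ^ k * real (n choose k))" by simp
  qed
  ultimately show ?thesis using tot part by linarith
qed

lemma swap_tri:
  "(\<Sum>k=1..n. \<Sum>j<k. f k j) = (\<Sum>j<n. \<Sum>k=Suc j..n. (f k j :: real))"
proof (induction n)
  case 0
  then show ?case by simp
next
  case (Suc n)
  have "(\<Sum>j<Suc n. \<Sum>k=Suc j..Suc n. f k j) = (\<Sum>j<Suc n. (\<Sum>k=Suc j..n. f k j) + f (Suc n) j)"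
    by (intro sum.cong refl) auto
  also have "\<dots> = (\<Sum>j<n. \<Sum>k=Suc j..n. f k j) + (\<Sum>j<Suc n. f (Suc n) j)"
    by (simp add: sum.distrib)
  finally show ?case using Suc by simp
qed

lemma comb_main:
  assumes "n \<ge> 1"
  shows "(\<Sum>k=1..n. (-1) ^ (k - 1) * real (n choose k) * (\<Sum>j<k. a j)) = (\<Sum>j<n. (-1) ^ j * real (n - 1 choose j) * a j)"
proof -
  have "(\<Sum>k=1..n. (-1) ^ (k - 1) * real (n choose k) * (\<Sum>j<k. a j)) =
        (\<Sum>k=1..n. \<Sum>j<k. (-1) ^ (k - 1) * real (n choose k) * a j)"
    by (simp add: sum_distrib_left)
  also have "\<dots> = (\<Sum>j<n. \<Sum>k=Suc j..n. (-1) ^ (k - 1) * real (n choose k) * a j)"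
    by (rule swap_tri)
  also have "\<dots> = (\<Sum>j<n. (\<Sum>k=Suc j..n. (-1) ^ (k - 1) * real (n choose k)) * a j)"
    by (simp add: sum_distrib_right)
  also have "\<dots> = (\<Sum>j<n. (-1) ^ j * real (n - 1 choose j) * a j)"
  proof (intro sum.cong refl)
    fix j assume "j \<in> {..<n}"
    then have "j < n" by simp
    from alt_partial[OF this] show "(\<Sum>k=Suc j..n. (-1) ^ (k - 1) * real (n choose k)) * a j = (-1) ^ j * real (n - 1 choose j) * a j"
      by simp
  qed
  finally show ?thesis .
qed

lemma poch_half: "pochhammer (1/2::real) i / pochhammer (3/2) i = 1 / (2 * real i + 1)"
proof -
  have "pochhammer (1/2::real) (Suc i) = 1/2 * pochhammer (1/2 + 1) i" by (rule pochhammer_rec)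
  moreover have "pochhammer (1/2::real) (Suc i) = (1/2 + real i) * pochhammer (1/2) i" by (rule pochhammer_rec')
  moreover have "pochhammer (3/2::real) i > 0" by (rule pochhammer_pos) simp
  moreover have "(1/2::real) + 1 = 3/2" by simp
  ultimately show ?thesis by (simp add: field_simps)
qed

lemma poch_neg: "pochhammer (- real N) i / fact i = (-1) ^ i * real (N choose i)"
proof -
  have "real N gchoose i = (-1) ^ i * pochhammer (- real N) i / fact i" by (rule gbinomial_pochhammer)
  then show ?thesis by (simp add: binomial_gbinomial)
qed

lemma fact_poch: "fact (M + i) = fact M * pochhammer (real M + 1) i"
proof (induction i)
  case 0 then show ?case by simp
next
  case (Suc i)
  have "fact (M + Suc i) = real (Suc (M + i)) * fact (M + i)" by simp
  also have "\<dots> = fact M * ((real M + 1 + real i) * pochhammer (real M + 1) i)"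
    using Suc by (simp add: algebra_simps)
  also have "\<dots> = fact M * pochhammer (real M + 1) (Suc i)" by (simp add: pochhammer_rec')
  finally show ?case .
qed

lemma fact_prod: "fact (a + m) = fact a * (\<Prod>i=1..m. real a + real i)"
proof (induction m)
  case 0 then show ?case by simp
next
  case (Suc m)
  then show ?case by (simp add: algebra_simps)
qed


lemma hyp12:
  fixes x :: real
  shows "hypergeom (replicate s (1/2) @ [1 - real (Suc N)]) (replicate s (3/2)) x
     = (\<Sum>i\<le>N. (-1) ^ i * real (N choose i) * (x ^ i / (2 * real i + 1) ^ s))"
proof -
  have t: "(\<Prod>a\<leftarrow>replicate s (1/2) @ [1 - real (Suc N)]. pochhammer a i) / (\<Prod>b\<leftarrow>replicate s (3/2). pochhammer b i) * x ^ i / fact i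
      = (-1) ^ i * real (N choose i) * (x ^ i / (2 * real i + 1) ^ s)" for i
  proof -
    have "(\<Prod>a\<leftarrow>replicate s (1/2) @ [1 - real (Suc N)]. pochhammer a i) / (\<Prod>b\<leftarrow>replicate s (3/2). pochhammer b i) * x ^ i / fact i
       = (pochhammer (1/2) i / pochhammer (3/2) i) ^ s * (pochhammer (- real N) i / fact i) * x ^ i"
      by (simp add: power_divide)
    also have "\<dots> = (-1) ^ i * real (N choose i) * (x ^ i / (2 * real i + 1) ^ s)"
      unfolding poch_half poch_neg by (simp add: power_divide)
    finally show ?thesis .
  qed
  show ?thesis unfolding hypergeom_def t
    by (rule suminf_finite) auto
qed

lemma hyp3:
  shows "hypergeom [1, 1 - real (Suc N)] [real m + real (Suc N)] (-1)
     = (\<Sum>i\<le>N. real (N choose i) * (fact i * fact (m + N) / fact (m + N + i)))"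
proof -
  have t: "(\<Prod>a\<leftarrow>[1, 1 - real (Suc N)]. pochhammer a i) / (\<Prod>b\<leftarrow>[real m + real (Suc N)]. pochhammer b i) * (-1) ^ i / fact i
      = real (N choose i) * (fact i * fact (m + N) / fact (m + N + i))" for i
  proof -
    have p1: "pochhammer (- real N) i = (-1) ^ i * real (N choose i) * fact i"
      using poch_neg[of N i] by (simp add: field_simps)
    have p2: "pochhammer (real m + real (Suc N)) i = fact (m + N + i) / fact (m + N)"
      using fact_poch[of "m + N" i] by (simp add: field_simps)
    have "(\<Prod>a\<leftarrow>[1, 1 - real (Suc N)]. pochhammer a i) / (\<Prod>b\<leftarrow>[real m + real (Suc N)]. pochhammer b i) * (-1) ^ i / fact i
       = (pochhammer 1 i * pochhammer (- real N) i) / pochhammer (real m + real (Suc N)) i * (-1) ^ i / fact i"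
      by simp
    also have "\<dots> = fact i * ((-1) ^ i * real (N choose i) * fact i) / (fact (m + N + i) / fact (m + N)) * (-1) ^ i / fact i"
      unfolding p1 p2 pochhammer_fact[symmetric] ..
    also have "\<dots> = real (N choose i) * (fact i * fact (m + N) / fact (m + N + i))"
      by (simp add: field_simps flip: power_add)
    finally show ?thesis .
  qed
  show ?thesis unfolding hypergeom_def t
    by (rule suminf_finite) auto
qed

theorem corollary3p6:
  fixes m n s :: nat
  assumes "m \<ge> 1" and "n \<ge> 1" and "s \<ge> 1"
  shows "hypergeom (replicate s (1/2) @ [1 - real n]) (replicate s (3/2)) 1
           = (\<Sum>k=1..n. (-1) ^ (k - 1) * real (n choose k) * Hbar k s) \<and>
         hypergeom (replicate s (1/2) @ [1 - real n]) (replicate s (3/2)) (-1)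
           = (\<Sum>k=1..n. (-1) ^ (k - 1) * real (n choose k) * Hbar_alt k s) \<and>
         hypergeom [1, 1 - real n] [real m + real n] (-1)
           = fact (m - 1) * (real m + real n - 1) * (\<Sum>k=1..n. (-1) ^ (k - 1) * real (n choose k) * G m k)"
proof -
  obtain N where n: "n = Suc N" using assms(2) by (cases n) auto
  obtain k where m: "m = Suc k" using assms(1) by (cases m) auto
  have lt: "{..<n} = {..N}" using n by auto
  have A: "hypergeom (replicate s (1/2) @ [1 - real n]) (replicate s (3/2)) 1
           = (\<Sum>k=1..n. (-1) ^ (k - 1) * real (n choose k) * Hbar k s)"
  proof -
    have "(\<Sum>k=1..n. (-1) ^ (k - 1) * real (n choose k) * Hbar k s) = (\<Sum>j<n. (-1) ^ j * real (n - 1 choose j) * (1 / (2 * real j + 1) ^ s))"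
      unfolding Hbar_def by (rule comb_main[OF assms(2)])
    then show ?thesis unfolding n hyp12 lt[unfolded n] by simp
  qed
  have B: "hypergeom (replicate s (1/2) @ [1 - real n]) (replicate s (3/2)) (-1)
           = (\<Sum>k=1..n. (-1) ^ (k - 1) * real (n choose k) * Hbar_alt k s)"
  proof -
    have "(\<Sum>k=1..n. (-1) ^ (k - 1) * real (n choose k) * Hbar_alt k s) = (\<Sum>j<n. (-1) ^ j * real (n - 1 choose j) * ((-1) ^ j / (2 * real j + 1) ^ s))"
      unfolding Hbar_alt_def by (rule comb_main[OF assms(2)])
    then show ?thesis unfolding n hyp12 lt[unfolded n] by simp
  qed
  have C: "hypergeom [1, 1 - real n] [real m + real n] (-1)
           = fact (m - 1) * (real m + real n - 1) * (\<Sum>k=1..n. (-1) ^ (k - 1) * real (n choose k) * G m k)"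
  proof -
    have g: "fact k * (1 / (\<Prod>i=1..m. 2 * real j + real i)) = Bf (2 * j) k" for j
    proof -
      have "fact (2 * j + m) = fact (2 * j) * (\<Prod>i=1..m. 2 * real j + real i)"
        using fact_prod[of "2 * j" m] by simp
      moreover have "2 * j + k + 1 = 2 * j + m" using m by simp
      ultimately have "Bf (2 * j) k = fact (2 * j) * fact k / (fact (2 * j) * (\<Prod>i=1..m. 2 * real j + real i))"
        unfolding Bf_def by (simp only:)
      also have "\<dots> = fact k / (\<Prod>i=1..m. 2 * real j + real i)"
        by (rule mult_divide_mult_cancel_left_if[THEN trans]) simp
      finally show ?thesis by simp
    qed
    have "fact (m - 1) * (real m + real n - 1) * (\<Sum>k=1..n. (-1) ^ (k - 1) * real (n choose k) * G m k)
        = real (m + N) * (\<Sum>j\<le>N. (-1) ^ j * real (N choose j) * (fact k * (1 / (\<Prod>i=1..m. 2 * real j + real i))))"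
    proof -
      have "(\<Sum>k=1..n. (-1) ^ (k - 1) * real (n choose k) * G m k) = (\<Sum>j<n. (-1) ^ j * real (n - 1 choose j) * (1 / (\<Prod>i=1..m. 2 * real j + real i)))"
        unfolding G_def by (rule comb_main[OF assms(2)])
      moreover have "fact (m - 1) * (real m + real n - 1) = real (m + N) * fact k" using m n by simp
      ultimately show ?thesis unfolding lt using n by (simp add: sum_distrib_left algebra_simps)
    qed
    also have "\<dots> = real (m + N) * (\<Sum>j\<le>N. ((-1) ^ j * real (N choose j)) * Bf (2 * j) k)"
      unfolding g by (simp add: mult.assoc)
    also have "\<dots> = real (m + N) * (\<Sum>j\<le>N. real (N choose j) * Bf j (N + k))"
      unfolding beta_sum ..
    also have "\<dots> = (\<Sum>i\<le>N. real (N choose i) * (fact i * fact (m + N) / fact (m + N + i)))"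
      unfolding sum_distrib_left
    proof (intro sum.cong refl)
      fix j
      have f: "fact (m + N) = real (m + N) * (fact (N + k) :: real)" using m by (simp add: fact_Suc add.commute)
      have "j + (N + k) + 1 = m + N + j" using m by simp
      then have e: "(fact (j + (N + k) + 1) :: real) = fact (m + N + j)" by (simp only:)
      show "real (m + N) * (real (N choose j) * Bf j (N + k)) = real (N choose j) * (fact j * fact (m + N) / fact (m + N + j))"
        unfolding Bf_def e f by simp
    qed
    finally show ?thesis unfolding n hyp3 by simp
  qed
  show ?thesis using A B C by blast
qed

end
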